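(* Almost surely, $$\lim_{m\to\infty}\lim_{\tau\to x_q^-}U_m(s_2(\tau))=-x_u,\qquad \lim_{m\to\infty}\lim_{\tau\to x_q^-}U_m(s_1(\tau))=(1-\pi)(x_q+x_u),$$ these limits equal $\mathbb E[\lim_{\tau\to x_q^-}u(s_k(\Theta,\tau))]$ for $k=2,1$ respectively, and in particular $\mathbb E\big[\lim_{\tau\to x_q^-}u(s_2(\Theta,\tau))-\lim_{\tau\to x_q^-}u(s_1(\Theta,\tau))\big]<0$.
   Context: Setup. Let $Q\in\{0,1\}$ be a random variable with $\mathbb P(Q=1)=\pi\in(0,1)$, and let $(\Theta,\Gamma)$ be a real-valued random vector whose conditional joint density given $Q=1$ is $h_q$ and given $Q=0$ is $h_u$, both strictly positive on $\mathbb R^2$. Monotone likelihood ratio assumption: $l(\theta,\gamma)=h_q(\theta,\gamma)/h_u(\theta,\gamma)$ is continuous and strictly increasing in each of $\theta$ and $\gamma$, and for each $\theta$ the map $\gamma\mapsto l(\theta,\gamma)$ has infimum $0$ and supremum $+\infty$. Fix payoffs $x_q>0$, $x_u>0$. For $\tau\in(-x_u,x_q)$ let $A(\tau)=\mathbb 1\{l(\Theta,\Gamma)>\frac{(1-\pi)(x_u+\tau)}{\pi(x_q-\tau)}\}$, $s_1(\theta,\tau)=\mathbb E[Q\mid\Theta=\theta,A(\tau)=1]$, $s_2(\theta,\tau)=\mathbb E[A(\tau)\mid\Theta=\theta]$. Regret. Fix a cutoff $c\in(-x_u,x_q)$. For a score value $s\in[0,1]$ and a qualification value $Q\in\{0,1\}$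 define $\mathcal N(s)=sx_q-(1-s)x_u$, $A'(s)=\mathbb 1\{\mathcal N(s)>c\}$, $\mathcal P(s)=A'(s)(Qx_q-(1-Q)x_u)$, and the individual regret $u(s)=\mathcal N(s)-\mathcal P(s)$; when evaluated at a random applicant $(\Theta,Q)$, $u(s_k(\Theta,\tau))$ uses that applicant's $Q$. Average regret. Let $(Q_i,\Theta_i)_{i\ge1}$ be i.i.d. copies of $(Q,\Theta)$ and, for $m\ge1$, $U_m(s_k(\tau))=\frac1m\sum_{i=1}^m u_i(s_k(\Theta_i,\tau))$, where $u_i$ is the regret computed with $Q_i$. *)

theory Defs
  imports "HOL-Probability.Probability"
begin

definition lr :: "(real \<times> real \<Rightarrow> real) \<Rightarrow> (real \<times> real \<Rightarrow> real) \<Rightarrow> real \<Rightarrow> real \<Rightarrow> real" where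
  "lr hq hu \<theta> \<gamma> = hq (\<theta>, \<gamma>) / hu (\<theta>, \<gamma>)"

definition thr :: "real \<Rightarrow> real \<Rightarrow> real \<Rightarrow> real \<Rightarrow> real" where
  "thr \<pi> xq xu \<tau> = (1 - \<pi>) * (xu + \<tau>) / (\<pi> * (xq - \<tau>))"

text \<open>Section at Theta = theta of the acceptance event A(tau)=1.\<close>
definition acc_set :: "(real \<times> real \<Rightarrow> real) \<Rightarrow> (real \<times> real \<Rightarrow> real) \<Rightarrow> real \<Rightarrow> real \<Rightarrow> real \<Rightarrow> real \<Rightarrow> real \<Rightarrow> real set" where
  "acc_set hq hu \<pi> xq xu \<theta> \<tau> = {\<gamma>. lr hq hu \<theta> \<gamma> > thr \<pi> xq xu \<tau>}"

text \<open>Joint (unconditional) density of (Theta,Gamma).\<close>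
definition mix :: "(real \<times> real \<Rightarrow> real) \<Rightarrow> (real \<times> real \<Rightarrow> real) \<Rightarrow> real \<Rightarrow> real \<times> real \<Rightarrow> real" where
  "mix hq hu \<pi> z = \<pi> * hq z + (1 - \<pi>) * hu z"

text \<open>s_2(theta,tau) = E[A(tau) | Theta = theta] = P(A(tau)=1 | Theta=theta), via densities.\<close>
definition s2 :: "(real \<times> real \<Rightarrow> real) \<Rightarrow> (real \<times> real \<Rightarrow> real) \<Rightarrow> real \<Rightarrow> real \<Rightarrow> real \<Rightarrow> real \<Rightarrow> real \<Rightarrow> real" where
  "s2 hq hu \<pi> xq xu \<theta> \<tau> =
     (LINT \<gamma>:acc_set hq hu \<pi> xq xu \<theta> \<tau>|lborel. mix hq hu \<pi> (\<theta>, \<gamma>)) /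
     (LINT \<gamma>|lborel. mix hq hu \<pi> (\<theta>, \<gamma>))"

text \<open>s_1(theta,tau) = E[Q | Theta = theta, A(tau)=1], via densities.\<close>
definition s1 :: "(real \<times> real \<Rightarrow> real) \<Rightarrow> (real \<times> real \<Rightarrow> real) \<Rightarrow> real \<Rightarrow> real \<Rightarrow> real \<Rightarrow> real \<Rightarrow> real \<Rightarrow> real" where
  "s1 hq hu \<pi> xq xu \<theta> \<tau> =
     (LINT \<gamma>:acc_set hq hu \<pi> xq xu \<theta> \<tau>|lborel. \<pi> * hq (\<theta>, \<gamma>)) /
     (LINT \<gamma>:acc_set hq hu \<pi> xq xu \<theta> \<tau>|lborel. mix hq hu \<pi> (\<theta>, \<gamma>))"

definition netv :: "real \<Rightarrow> real \<Rightarrow> real \<Rightarrow> real" where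
  "netv xq xu s = s * xq - (1 - s) * xu"

definition accp :: "real \<Rightarrow> real \<Rightarrow> real \<Rightarrow> real \<Rightarrow> real" where
  "accp c xq xu s = (if netv xq xu s > c then 1 else 0)"

definition payoff :: "real \<Rightarrow> real \<Rightarrow> real \<Rightarrow> real \<Rightarrow> real \<Rightarrow> real" where
  "payoff c xq xu s q = accp c xq xu s * (q * xq - (1 - q) * xu)"

definition regret :: "real \<Rightarrow> real \<Rightarrow> real \<Rightarrow> real \<Rightarrow> real \<Rightarrow> real" where
  "regret c xq xu s q = netv xq xu s - payoff c xq xu s q"

definition avg_regret :: "real \<Rightarrow> real \<Rightarrow> real \<Rightarrow> (real \<Rightarrow> real \<Rightarrow> real)
    \<Rightarrow> (nat \<Rightarrow> 'a \<Rightarrow> real) \<Rightarrow> (nat \<Rightarrow> 'a \<Rightarrow> real) \<Rightarrow> nat \<Rightarrow> 'a \<Rightarrow> real \<Rightarrow> real" where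
  "avg_regret c xq xu s Qs Ths m \<omega> \<tau> =
     (1 / real m) * (\<Sum>i\<in>{1..m}. regret c xq xu (s (Ths i \<omega>) \<tau>) (Qs i \<omega>))"

end

theory Submission
  imports Defs "HOL-Real_Asymp.Real_Asymp"
begin



lemma thr_lim:
  assumes "0 < \<pi>" "\<pi> < 1" "xq > 0" "xu > 0"
  shows "filterlim (thr \<pi> xq xu) at_top (at_left xq)"
proof -
  have "filterlim (\<lambda>\<tau>. ((1 - \<pi>) * (xu + \<tau>)/\<pi>) * inverse (xq - \<tau>)) at_top (at_left xq)"
  proof (rule filterlim_tendsto_pos_mult_at_top)
    show "((\<lambda>\<tau>. (1 - \<pi>) * (xu + \<tau>)/\<pi>) \<longlongrightarrow> (1 - \<pi>) * (xu + xq)/\<pi>) (at_left xq)"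
      using assms by (intro tendsto_intros) auto
    show "0 < (1 - \<pi>) * (xu + xq)/\<pi>" using assms by auto
    show "filterlim (\<lambda>\<tau>. inverse (xq - \<tau>)) at_top (at_left xq)"
      by real_asymp
  qed
  thus ?thesis
    by (rule filterlim_cong[THEN iffD1, rotated 3]) (auto simp: thr_def field_simps)
qed

lemma gm_tendsto0:
  fixes f g :: "real \<Rightarrow> real"
  assumes "integrable lborel f" "\<And>\<gamma>. f \<gamma> \<ge> 0" "g \<in> borel_measurable borel"
  shows "((\<lambda>t. LINT \<gamma>:{\<gamma>. g \<gamma> > t}|lborel. f \<gamma>) \<longlongrightarrow> 0) at_top"
proof -
  have m: "\<And>t. (\<lambda>\<gamma>. indicator {\<gamma>. g \<gamma> > t} \<gamma> *\<^sub>R f \<gamma>) \<in> borel_measurable lborel"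
    using assms by (intro borel_measurable_scaleR borel_measurable_indicator) (auto simp: borel_measurable_integrable)
  have l: "AE x in lborel. ((\<lambda>i. indicator {\<gamma>. g \<gamma> > i} x *\<^sub>R f x) \<longlongrightarrow> 0) at_top"
  proof (rule AE_I2)
    fix x
    have "eventually (\<lambda>i. indicator {\<gamma>. g \<gamma> > i} x *\<^sub>R f x = 0) at_top"
      using eventually_ge_at_top[of "g x"] by eventually_elim (auto simp: indicator_def)
    then show "((\<lambda>i. indicator {\<gamma>. g \<gamma> > i} x *\<^sub>R f x) \<longlongrightarrow> 0) at_top"
      by (rule tendsto_eventually)
  qed
  have b: "\<forall>\<^sub>F i in at_top. AE x in lborel. norm (indicator {\<gamma>. g \<gamma> > i} x *\<^sub>R f x) \<le> f x"
    using assms by (auto simp: indicator_def)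
  have "((\<lambda>t. integral\<^sup>L lborel (\<lambda>\<gamma>. indicator {\<gamma>. g \<gamma> > t} \<gamma> *\<^sub>R f \<gamma>)) \<longlongrightarrow> integral\<^sup>L lborel (\<lambda>_. 0::real)) at_top"
  proof -
    note X = integral_dominated_convergence_at_top[OF _ m assms(1) l b]
    thm X
    show ?thesis using X by simp
  qed
  thus ?thesis by (simp add: set_lebesgue_integral_def)
qed

lemma pos_setint:
  fixes h :: "real \<Rightarrow> real"
  assumes hi: "integrable lborel h" and hp: "\<And>\<gamma>. h \<gamma> > 0"
    and A: "A \<in> sets borel" and sub: "{\<gamma>1<..} \<subseteq> A"
  shows "(LINT \<gamma>:A|lborel. h \<gamma>) > 0"
proof -
  have i: "integrable lborel (\<lambda>\<gamma>. indicator A \<gamma> *\<^sub>R h \<gamma>)"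
    using A hi by (intro integrable_mult_indicator) auto
  have nn: "(LINT \<gamma>:A|lborel. h \<gamma>) \<ge> 0"
    unfolding set_lebesgue_integral_def using hp
    by (intro Bochner_Integration.integral_nonneg) (auto simp: indicator_def less_imp_le)
  moreover have "(LINT \<gamma>:A|lborel. h \<gamma>) \<noteq> 0"
  proof
    assume "(LINT \<gamma>:A|lborel. h \<gamma>) = 0"
    then have "AE \<gamma> in lborel. indicator A \<gamma> *\<^sub>R h \<gamma> = 0"
      unfolding set_lebesgue_integral_def using i hp
      by (subst (asm) integral_nonneg_eq_0_iff_AE) (auto simp: indicator_def less_imp_le)
    then have "AE \<gamma> in lborel. \<gamma> \<notin> A"
    proof eventually_elim
      fix \<gamma> assume "indicator A \<gamma> *\<^sub>R h \<gamma> = 0"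
      then show "\<gamma> \<notin> A" using hp[of \<gamma>] by (auto simp: indicator_def split: if_splits)
    qed
    then have "AE \<gamma> in lborel. indicator {\<gamma>1<..\<gamma>1+1} \<gamma> = (0::real)"
      by eventually_elim (use sub in \<open>auto simp: indicator_def\<close>)
    then have "(LBINT \<gamma>. indicator {\<gamma>1<..\<gamma>1+1} \<gamma> :: real) = 0"
      by (rule integral_eq_zero_AE)
    then show False by simp
  qed
  ultimately show ?thesis by linarith
qed

lemma ratio_tendsto1:
  fixes p u :: "real \<Rightarrow> real" and \<pi> :: real
  assumes pi: "p \<in> borel_measurable borel" "u \<in> borel_measurable borel"
    "integrable lborel p" "integrable lborel u"
    and pp: "\<And>\<gamma>. p \<gamma> > 0" and up: "\<And>\<gamma>. u \<gamma> > 0" and pib: "0 < \<pi>" "\<pi> < 1"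
    and mono: "strict_mono (\<lambda>\<gamma>. p \<gamma> / u \<gamma>)" and unb: "\<not> bdd_above (range (\<lambda>\<gamma>. p \<gamma> / u \<gamma>))"
  shows "((\<lambda>t. (LINT \<gamma>:{\<gamma>. p \<gamma> / u \<gamma> > t}|lborel. \<pi> * p \<gamma>) /
                (LINT \<gamma>:{\<gamma>. p \<gamma> / u \<gamma> > t}|lborel. \<pi> * p \<gamma> + (1 - \<pi>) * u \<gamma>)) \<longlongrightarrow> 1) at_top"
proof (rule tendsto_sandwich[where f="\<lambda>t. 1 - (1 - \<pi>) / (\<pi> * t)" and h="\<lambda>_. 1"])
  have "((\<lambda>t. 1 - (1 - \<pi>) / \<pi> * inverse t) \<longlongrightarrow> 1 - (1 - \<pi>) / \<pi> * 0) at_top"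
    by (intro tendsto_intros tendsto_inverse_0_at_top filterlim_ident)
  then show "((\<lambda>t. 1 - (1 - \<pi>) / (\<pi> * t)) \<longlongrightarrow> 1) at_top"
    by (simp add: field_simps)
  show "((\<lambda>_. 1::real) \<longlongrightarrow> 1) at_top" by simp
  define A where "A t = {\<gamma>. p \<gamma> / u \<gamma> > t}" for t
  have dm: "(\<lambda>\<gamma>. p \<gamma> / u \<gamma>) \<in> borel_measurable borel"
    using pi by (intro borel_measurable_divide)
  have Am: "A t \<in> sets borel" for t
    using dm unfolding A_def borel_measurable_iff_greater by simp
  have si: "set_integrable lborel (A t) f" if "integrable lborel f" "f \<in> borel_measurable borel" for t and f :: "real \<Rightarrow> real"
    unfolding set_integrable_def using that Am by (intro integrable_mult_indicator) (auto simp: sets_lborel)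
  have ip: "integrable lborel (\<lambda>\<gamma>. \<pi> * p \<gamma>)" "integrable lborel (\<lambda>\<gamma>. (1 - \<pi>) * u \<gamma>)"
    using pi by auto
  have bounds: "1 - (1 - \<pi>) / (\<pi> * t) \<le> (LINT \<gamma>:A t|lborel. \<pi> * p \<gamma>) /
                (LINT \<gamma>:A t|lborel. \<pi> * p \<gamma> + (1 - \<pi>) * u \<gamma>) \<and>
         (LINT \<gamma>:A t|lborel. \<pi> * p \<gamma>) / (LINT \<gamma>:A t|lborel. \<pi> * p \<gamma> + (1 - \<pi>) * u \<gamma>) \<le> 1"
    if t: "t > 0" for t
  proof -
    define N1 where "N1 = (LINT \<gamma>:A t|lborel. \<pi> * p \<gamma>)"
    define R where "R = (LINT \<gamma>:A t|lborel. (1 - \<pi>) * u \<gamma>)"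
    have sN: "(LINT \<gamma>:A t|lborel. \<pi> * p \<gamma> + (1 - \<pi>) * u \<gamma>) = N1 + R"
      unfolding N1_def R_def using pi
      by (intro set_integral_add(2) si integrable_mult_right borel_measurable_times borel_measurable_const) auto
    obtain \<gamma>1 where g1: "p \<gamma>1 / u \<gamma>1 > t"
      using unb by (force simp: bdd_above_def not_le)
    have sub: "{\<gamma>1<..} \<subseteq> A t"
      unfolding A_def using g1 mono by (auto simp: strict_mono_def intro: less_trans)
    have N1p: "N1 > 0" unfolding N1_def
      by (rule pos_setint[OF ip(1) _ Am sub]) (use pp pib in auto)
    have R0: "R \<ge> 0" unfolding R_def set_lebesgue_integral_def using up pib
      by (intro Bochner_Integration.integral_nonneg) (auto simp: indicator_def less_imp_le)
    have "R \<le> (LINT \<gamma>:A t|lborel. ((1 - \<pi>) / (\<pi> * t)) * (\<pi> * p \<gamma>))"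
      unfolding R_def
    proof (rule set_integral_mono)
      show "set_integrable lborel (A t) (\<lambda>\<gamma>. (1 - \<pi>) * u \<gamma>)" using pi by (intro si integrable_mult_right borel_measurable_times borel_measurable_const) auto
      show "set_integrable lborel (A t) (\<lambda>\<gamma>. ((1 - \<pi>) / (\<pi> * t)) * (\<pi> * p \<gamma>))" using pi by (intro si integrable_mult_right borel_measurable_times borel_measurable_const) auto
      fix \<gamma> assume "\<gamma> \<in> A t"
      then have "t < p \<gamma> / u \<gamma>" by (simp add: A_def)
      then have "t * u \<gamma> < p \<gamma>" using up[of \<gamma>] by (simp add: field_simps)
      then have "u \<gamma> \<le> p \<gamma> / t" using t by (simp add: field_simps)
      then have "(1 - \<pi>) * u \<gamma> \<le> (1 - \<pi>) * (p \<gamma> / t)" using pib by (intro mult_left_mono) auto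
      also have "\<dots> = ((1 - \<pi>) / (\<pi> * t)) * (\<pi> * p \<gamma>)" using pib t by (simp add: field_simps)
      finally show "(1 - \<pi>) * u \<gamma> \<le> ((1 - \<pi>) / (\<pi> * t)) * (\<pi> * p \<gamma>)" .
    qed
    also have "\<dots> = ((1 - \<pi>) / (\<pi> * t)) * N1" unfolding N1_def by simp
    finally have RN: "R \<le> ((1 - \<pi>) / (\<pi> * t)) * N1" .
    have k: "(1 - \<pi>) / (\<pi> * t) \<ge> 0" using pib t by auto
    have "1 - (1 - \<pi>) / (\<pi> * t) \<le> N1 / (N1 + R)"
    proof -
      have "(1 - (1 - \<pi>) / (\<pi> * t)) * (N1 + R) \<le> N1"
      proof -
        have "(1 - (1 - \<pi>) / (\<pi> * t)) * (N1 + R) = N1 + R - ((1 - \<pi>) / (\<pi> * t)) * (N1 + R)"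
          by (simp add: algebra_simps)
        also have "\<dots> \<le> N1 + R - R" using RN mult_left_mono[of N1 "N1 + R" "(1 - \<pi>) / (\<pi> * t)"] k R0 by linarith
        finally show ?thesis by simp
      qed
      then show ?thesis using N1p R0 by (subst pos_le_divide_eq) auto
    qed
    moreover have "N1 / (N1 + R) \<le> 1" using N1p R0 by (subst pos_divide_le_eq) auto
    ultimately show ?thesis using sN by (simp add: N1_def)
  qed
  show "\<forall>\<^sub>F t in at_top. 1 - (1 - \<pi>) / (\<pi> * t) \<le> (LINT \<gamma>:{\<gamma>. p \<gamma> / u \<gamma> > t}|lborel. \<pi> * p \<gamma>) /
                (LINT \<gamma>:{\<gamma>. p \<gamma> / u \<gamma> > t}|lborel. \<pi> * p \<gamma> + (1 - \<pi>) * u \<gamma>)" (is "\<forall>\<^sub>F t in at_top. ?P t")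
  proof (rule eventually_mono[OF eventually_gt_at_top[of 0]])
    fix t :: real assume "t > 0"
    from bounds[OF this] show "?P t" by (simp add: A_def)
  qed
  show "\<forall>\<^sub>F t in at_top. (LINT \<gamma>:{\<gamma>. p \<gamma> / u \<gamma> > t}|lborel. \<pi> * p \<gamma>) /
                (LINT \<gamma>:{\<gamma>. p \<gamma> / u \<gamma> > t}|lborel. \<pi> * p \<gamma> + (1 - \<pi>) * u \<gamma>) \<le> 1" (is "\<forall>\<^sub>F t in at_top. ?P t")
  proof (rule eventually_mono[OF eventually_gt_at_top[of 0]])
    fix t :: real assume "t > 0"
    from bounds[OF this] show "?P t" by (simp add: A_def)
  qed
qed

lemma sec_meas:
  fixes h :: "real \<times> real \<Rightarrow> real"
  assumes "h \<in> borel_measurable borel"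
  shows "(\<lambda>\<gamma>. h (\<theta>, \<gamma>)) \<in> borel_measurable borel"
  using assms by measurable

lemma mix_pos:
  assumes "\<forall>z. hq z > 0" "\<forall>z. hu z > 0" "0 < \<pi>" "\<pi> < 1"
  shows "mix hq hu \<pi> z > 0"
proof -
  have "\<pi> * hq z > 0" "(1 - \<pi>) * hu z > 0" using assms(3,4) assms(1)[rule_format, of z] assms(2)[rule_format, of z] by simp_all
  then show ?thesis unfolding mix_def by linarith
qed

lemma regret_lim0:
  assumes "(s \<longlongrightarrow> 0) F" "- xu < c"
  shows "((\<lambda>\<tau>. regret c xq xu (s \<tau>) q) \<longlongrightarrow> - xu) F"
proof -
  have n: "((\<lambda>\<tau>. netv xq xu (s \<tau>)) \<longlongrightarrow> 0 * xq - (1 - 0) * xu) F"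
    unfolding netv_def by (rule tendsto_diff[OF tendsto_mult[OF assms(1) tendsto_const] tendsto_mult[OF tendsto_diff[OF tendsto_const assms(1)] tendsto_const]])
  have "0 * xq - (1 - 0) * xu < c" using assms(2) by simp
  from order_tendstoD(2)[OF n this]
  have "eventually (\<lambda>\<tau>. regret c xq xu (s \<tau>) q = netv xq xu (s \<tau>)) F"
    by eventually_elim (simp add: regret_def payoff_def accp_def)
  from tendsto_cong[OF this] n show ?thesis by simp
qed

lemma regret_lim1:
  assumes "(s \<longlongrightarrow> 1) F" "c < xq"
  shows "((\<lambda>\<tau>. regret c xq xu (s \<tau>) q) \<longlongrightarrow> xq - (q * xq - (1 - q) * xu)) F"
proof -
  have n: "((\<lambda>\<tau>. netv xq xu (s \<tau>)) \<longlongrightarrow> 1 * xq - (1 - 1) * xu) F"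
    unfolding netv_def by (intro tendsto_intros assms)
  have "1 * xq - (1 - 1) * xu > c" using assms(2) by simp
  from order_tendstoD(1)[OF n this]
  have "eventually (\<lambda>\<tau>. regret c xq xu (s \<tau>) q = netv xq xu (s \<tau>) - (q * xq - (1 - q) * xu)) F"
    by eventually_elim (simp add: regret_def payoff_def accp_def)
  from tendsto_cong[OF this] tendsto_diff[OF n tendsto_const[of "q * xq - (1 - q) * xu"]]
  show ?thesis by simp
qed

lemma s2_lim:
  assumes hq: "hq \<in> borel_measurable borel" and hu: "hu \<in> borel_measurable borel"
    and hqp: "\<forall>z. hq z > 0" and hup: "\<forall>z. hu z > 0"
    and pib: "0 < \<pi>" "\<pi> < 1" and xq: "xq > 0" and xu: "xu > 0"
  shows "((\<lambda>\<tau>. s2 hq hu \<pi> xq xu \<theta> \<tau>) \<longlongrightarrow> 0) (at_left xq)"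
proof (cases "integrable lborel (\<lambda>\<gamma>. mix hq hu \<pi> (\<theta>, \<gamma>))")
  case False
  then show ?thesis by (simp add: s2_def not_integrable_integral_eq)
next
  case True
  have g: "(\<lambda>\<gamma>. lr hq hu \<theta> \<gamma>) \<in> borel_measurable borel"
    unfolding lr_def using sec_meas[OF hq] sec_meas[OF hu] by (intro borel_measurable_divide)
  have "((\<lambda>t. LINT \<gamma>:{\<gamma>. lr hq hu \<theta> \<gamma> > t}|lborel. mix hq hu \<pi> (\<theta>, \<gamma>)) \<longlongrightarrow> 0) at_top"
    by (rule gm_tendsto0[OF True _ g]) (use mix_pos[OF hqp hup pib] in \<open>simp add: less_imp_le\<close>)
  from filterlim_compose[OF this thr_lim[OF pib xq xu]]
  have "((\<lambda>\<tau>. LINT \<gamma>:acc_set hq hu \<pi> xq xu \<theta> \<tau>|lborel. mix hq hu \<pi> (\<theta>, \<gamma>)) \<longlongrightarrow> 0) (at_left xq)"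
    by (simp add: acc_set_def)
  then show ?thesis unfolding s2_def by (rule tendsto_divide_zero)
qed

lemma s1_lim:
  assumes hq: "hq \<in> borel_measurable borel" and hu: "hu \<in> borel_measurable borel"
    and hqp: "\<forall>z. hq z > 0" and hup: "\<forall>z. hu z > 0"
    and pib: "0 < \<pi>" "\<pi> < 1" and xq: "xq > 0" and xu: "xu > 0"
    and iq: "integrable lborel (\<lambda>\<gamma>. hq (\<theta>, \<gamma>))" and iu: "integrable lborel (\<lambda>\<gamma>. hu (\<theta>, \<gamma>))"
    and mono: "strict_mono (\<lambda>\<gamma>. lr hq hu \<theta> \<gamma>)"
    and unb: "\<not> bdd_above (range (\<lambda>\<gamma>. lr hq hu \<theta> \<gamma>))"
  shows "((\<lambda>\<tau>. s1 hq hu \<pi> xq xu \<theta> \<tau>) \<longlongrightarrow> 1) (at_left xq)"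
proof -
  have "((\<lambda>t. (LINT \<gamma>:{\<gamma>. hq (\<theta>, \<gamma>) / hu (\<theta>, \<gamma>) > t}|lborel. \<pi> * hq (\<theta>, \<gamma>)) /
                (LINT \<gamma>:{\<gamma>. hq (\<theta>, \<gamma>) / hu (\<theta>, \<gamma>) > t}|lborel. \<pi> * hq (\<theta>, \<gamma>) + (1 - \<pi>) * hu (\<theta>, \<gamma>))) \<longlongrightarrow> 1) at_top"
    by (rule ratio_tendsto1[OF sec_meas[OF hq] sec_meas[OF hu] iq iu _ _ pib])
       (use hqp hup mono unb in \<open>simp_all add: lr_def\<close>)
  from filterlim_compose[OF this thr_lim[OF pib xq xu]]
  show ?thesis by (simp add: s1_def acc_set_def lr_def mix_def)
qed



lemma slln01:
  fixes M :: "'a measure" and X :: "nat \<Rightarrow> 'a \<Rightarrow> real" and Y :: "'a \<Rightarrow> real"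
  assumes P: "prob_space M"
    and indep: "prob_space.indep_vars M (\<lambda>_. borel) X {1..}"
    and distr: "\<forall>i\<ge>1. distr M borel (X i) = distr M borel Y"
    and Ym: "Y \<in> borel_measurable M"
    and Yb: "AE x in M. Y x \<in> {0..1}"
  shows "AE \<omega> in M. (\<lambda>n. (\<Sum>i\<in>{1..n}. X i \<omega>) / real n) \<longlonglongrightarrow> prob_space.expectation M Y"
proof -
  interpret prob_space M by (rule P)
  define \<mu> where "\<mu> = expectation Y"
  have bound: "prob {x\<in>space M. \<bar>(\<Sum>i\<in>{1..n}. X i x) / real n - \<mu>\<bar> \<ge> \<epsilon>} \<le> 2 * exp (-2 * real n * \<epsilon>\<^sup>2)"
    if n: "n \<ge> 1" and e: "\<epsilon> \<ge> 0" for n :: nat and \<epsilon> :: real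
  proof -
    interpret H: Hoeffding_ineq_iid M "{1..n}" X Y 0 1 \<mu>
    proof unfold_locales
      show "indep_vars (\<lambda>_. borel) X {1..n}"
        by (rule indep_vars_subset[OF indep]) auto
      show "i \<in> {1..n} \<Longrightarrow> distr M borel (X i) = distr M borel Y" for i using distr by auto
    qed (use Ym Yb \<mu>_def in auto)
    have "prob {x\<in>space M. \<bar>(\<Sum>i\<in>{1..n}. X i x) / real (card {1..n}) - \<mu>\<bar> \<ge> \<epsilon>} \<le>
            2 * exp (-2 * real (card {1..n}) * \<epsilon>\<^sup>2 / (1 - 0)\<^sup>2)"
      by (rule H.Hoeffding_ineq_abs_ge'[OF e]) (use n in auto)
    then show ?thesis by simp
  qed
  have ev: "AE \<omega> in M. eventually (\<lambda>n. \<bar>(\<Sum>i\<in>{1..n}. X i \<omega>) / real n - \<mu>\<bar> < 1 / Suc k) sequentially" for k :: nat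
  proof -
    define \<epsilon> :: real where "\<epsilon> = 1 / Suc k"
    have e: "\<epsilon> > 0" by (simp add: \<epsilon>_def)
    define A where "A n = {x\<in>space M. \<bar>(\<Sum>i\<in>{1..n}. X i x) / real n - \<mu>\<bar> \<ge> \<epsilon>}" for n
    have Xm: "i \<ge> 1 \<Longrightarrow> X i \<in> borel_measurable M" for i
      using indep unfolding indep_vars_def by auto
    have Am: "A n \<in> sets M" for n
    proof -
      have "(\<lambda>x. \<bar>(\<Sum>i\<in>{1..n}. X i x) / real n - \<mu>\<bar>) \<in> borel_measurable M"
        using Xm by (intro borel_measurable_abs borel_measurable_diff borel_measurable_divide borel_measurable_sum) auto
      then show ?thesis unfolding A_def by measurable
    qed
    have sm: "summable (\<lambda>n. measure M (A n))"
    proof (rule summable_comparison_test')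
      show "summable (\<lambda>n. 2 * exp (-2 * \<epsilon>\<^sup>2) ^ n)"
        using e by (intro summable_mult summable_geometric) auto
      fix n :: nat assume "n \<ge> 1"
      then have "measure M (A n) \<le> 2 * exp (-2 * real n * \<epsilon>\<^sup>2)"
        unfolding A_def using bound[of n \<epsilon>] e by simp
      also have "exp (-2 * real n * \<epsilon>\<^sup>2) = exp (-2 * \<epsilon>\<^sup>2) ^ n"
        by (subst exp_of_nat_mult[symmetric]) (simp add: algebra_simps)
      finally show "norm (measure M (A n)) \<le> 2 * exp (-2 * \<epsilon>\<^sup>2) ^ n" by simp
    qed
    have fin: "\<And>n. emeasure M (A n) < \<infinity>" by (simp add: emeasure_eq_measure)
    from sm have bc: "AE x in M. eventually (\<lambda>n. x \<in> space M - A n) sequentially"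
      by (rule borel_cantelli_AE1[where A=A, OF Am fin])
    from bc
    have "AE x in M. eventually (\<lambda>n. x \<in> space M - A n) sequentially" by simp
    then show ?thesis
    proof eventually_elim
      case (elim x)
      then show ?case
        by (rule eventually_mono) (auto simp: A_def \<epsilon>_def)
    qed
  qed
  then have "AE \<omega> in M. \<forall>k. eventually (\<lambda>n. \<bar>(\<Sum>i\<in>{1..n}. X i \<omega>) / real n - \<mu>\<bar> < 1 / Suc k) sequentially"
    by (simp add: AE_all_countable)
  then show ?thesis
  proof eventually_elim
    case (elim \<omega>)
    show ?case unfolding \<mu>_def[symmetric]
    proof (rule LIMSEQ_I)
      fix r :: real assume "r > 0"
      then obtain k where k: "inverse (real (Suc k)) < r" using reals_Archimedean by blast
      from elim[rule_format, of k] obtain N where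
        N: "\<And>n. n \<ge> N \<Longrightarrow> \<bar>(\<Sum>i\<in>{1..n}. X i \<omega>) / real n - \<mu>\<bar> < 1 / Suc k"
        by (auto simp: eventually_sequentially)
      have "norm ((\<Sum>i\<in>{1..n}. X i \<omega>) / real n - \<mu>) < r" if "n \<ge> N" for n
      proof -
        have "1 / real (Suc k) = inverse (real (Suc k))" by (simp add: inverse_eq_divide)
        with N[OF that] k show ?thesis by (simp only: real_norm_def)
      qed
      then show "\<exists>N. \<forall>n\<ge>N. norm ((\<Sum>i\<in>{1..n}. X i \<omega>) / real n - \<mu>) < r" by blast
    qed
  qed
qed




lemma (in prob_space) expect_Q:
  assumes Qm: "Q \<in> borel_measurable M" and Qv: "\<forall>\<omega>\<in>space M. Q \<omega> \<in> {0, 1}"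
    and Qp: "measure M {\<omega>\<in>space M. Q \<omega> = 1} = \<pi>"
  shows "integrable M Q" "expectation Q = \<pi>"
proof -
  show "integrable M Q" using Qm Qv by (intro integrable_const_bound[where B=1] AE_I2) auto
  have S: "{\<omega>\<in>space M. Q \<omega> = 1} \<in> sets M" using Qm by measurable
  have "expectation Q = expectation (indicator {\<omega>\<in>space M. Q \<omega> = 1})"
    by (intro Bochner_Integration.integral_cong) (use Qv in \<open>auto simp: indicator_def\<close>)
  also have "\<dots> = \<pi>" using S Qp by (simp add: emeasure_eq_measure)
  finally show "expectation Q = \<pi>" .
qed

lemma avg_lim:
  assumes "\<And>i. i \<in> {1..m} \<Longrightarrow> ((\<lambda>\<tau>. regret c xq xu (s (Ths i \<omega>) \<tau>) (Qs i \<omega>)) \<longlongrightarrow> y i) F"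
  shows "((\<lambda>\<tau>. avg_regret c xq xu s Qs Ths m \<omega> \<tau>) \<longlongrightarrow> (1 / real m) * (\<Sum>i\<in>{1..m}. y i)) F"
  unfolding avg_regret_def by (intro tendsto_mult tendsto_const tendsto_sum assms)

theorem mainTheorem17:
  fixes M :: "'a measure"
    and Q \<Theta> \<Gamma> :: "'a \<Rightarrow> real"
    and Qs Ths :: "nat \<Rightarrow> 'a \<Rightarrow> real"
    and hq hu :: "real \<times> real \<Rightarrow> real"
    and \<pi> xq xu c :: real
  assumes P: "prob_space M"
    and Q_rv: "Q \<in> borel_measurable M" and Th_rv: "\<Theta> \<in> borel_measurable M"
    and Ga_rv: "\<Gamma> \<in> borel_measurable M"
    and Q_vals: "\<forall>\<omega>\<in>space M. Q \<omega> \<in> {0, 1}"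
    and pi_bd: "0 < \<pi>" "\<pi> < 1"
    and Q_prob: "measure M {\<omega>\<in>space M. Q \<omega> = 1} = \<pi>"
    and hq_meas: "hq \<in> borel_measurable borel" and hu_meas: "hu \<in> borel_measurable borel"
    and hq_int: "integrable lborel hq" and hu_int: "integrable lborel hu"
    and hq_pos: "\<forall>z. hq z > 0" and hu_pos: "\<forall>z. hu z > 0"
    and dens_q: "\<forall>B\<in>sets (borel :: (real \<times> real) measure).
        measure M {\<omega>\<in>space M. Q \<omega> = 1 \<and> (\<Theta> \<omega>, \<Gamma> \<omega>) \<in> B} = \<pi> * (LINT z:B|lborel. hq z)"
    and dens_u: "\<forall>B\<in>sets (borel :: (real \<times> real) measure).
        measure M {\<omega>\<in>space M. Q \<omega> = 0 \<and> (\<Theta> \<omega>, \<Gamma> \<omega>) \<in> B} = (1 - \<pi>) * (LINT z:B|lborel. hu z)"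
    and l_cont: "continuous_on UNIV (\<lambda>z. hq z / hu z)"
    and l_mono_th: "\<forall>\<gamma>. strict_mono (\<lambda>\<theta>. lr hq hu \<theta> \<gamma>)"
    and l_mono_ga: "\<forall>\<theta>. strict_mono (\<lambda>\<gamma>. lr hq hu \<theta> \<gamma>)"
    and l_inf: "\<forall>\<theta>. (INF \<gamma>. lr hq hu \<theta> \<gamma>) = 0"
    and l_sup: "\<forall>\<theta>. \<not> bdd_above (range (\<lambda>\<gamma>. lr hq hu \<theta> \<gamma>))"
    and xq_pos: "xq > 0" and xu_pos: "xu > 0"
    and c_bd: "- xu < c" "c < xq"
    and copies_rv: "\<forall>i\<ge>1. Qs i \<in> borel_measurable M \<and> Ths i \<in> borel_measurable M"
    and copies_indep: "prob_space.indep_vars M (\<lambda>_. borel) (\<lambda>i \<omega>. (Qs i \<omega>, Ths i \<omega>)) {1..}"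
    and copies_distr: "\<forall>i\<ge>1. distr M borel (\<lambda>\<omega>. (Qs i \<omega>, Ths i \<omega>)) = distr M borel (\<lambda>\<omega>. (Q \<omega>, \<Theta> \<omega>))"
  shows
    "(AE \<omega> in M. \<exists>L :: nat \<Rightarrow> real.
        (\<forall>m\<ge>1. ((\<lambda>\<tau>. avg_regret c xq xu (s2 hq hu \<pi> xq xu) Qs Ths m \<omega> \<tau>) \<longlongrightarrow> L m) (at_left xq))
        \<and> L \<longlonglongrightarrow> - xu)
   \<and> (AE \<omega> in M. \<exists>L :: nat \<Rightarrow> real.
        (\<forall>m\<ge>1. ((\<lambda>\<tau>. avg_regret c xq xu (s1 hq hu \<pi> xq xu) Qs Ths m \<omega> \<tau>) \<longlongrightarrow> L m) (at_left xq))
        \<and> L \<longlonglongrightarrow> (1 - \<pi>) * (xq + xu))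
   \<and> (\<exists>Y2 Y1 :: 'a \<Rightarrow> real.
        (AE \<omega> in M. ((\<lambda>\<tau>. regret c xq xu (s2 hq hu \<pi> xq xu (\<Theta> \<omega>) \<tau>) (Q \<omega>)) \<longlongrightarrow> Y2 \<omega>) (at_left xq))
      \<and> (AE \<omega> in M. ((\<lambda>\<tau>. regret c xq xu (s1 hq hu \<pi> xq xu (\<Theta> \<omega>) \<tau>) (Q \<omega>)) \<longlongrightarrow> Y1 \<omega>) (at_left xq))
      \<and> integrable M Y2 \<and> integrable M Y1
      \<and> (LINT \<omega>|M. Y2 \<omega>) = - xu
      \<and> (LINT \<omega>|M. Y1 \<omega>) = (1 - \<pi>) * (xq + xu)
      \<and> (LINT \<omega>|M. Y2 \<omega> - Y1 \<omega>) < 0)"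
proof -
  interpret prob_space M by (rule P)
  define good where "good \<theta> \<longleftrightarrow> integrable lborel (\<lambda>\<gamma>. hq (\<theta>, \<gamma>)) \<and> integrable lborel (\<lambda>\<gamma>. hu (\<theta>, \<gamma>))" for \<theta>
  have AEgood: "AE \<theta> in lborel. good \<theta>"
  proof -
    have ps: "pair_sigma_finite (lborel :: real measure) (lborel :: real measure)"
      by (simp add: pair_sigma_finite_def lborel.sigma_finite_measure_axioms)
    have "integrable (lborel \<Otimes>\<^sub>M lborel) hq" "integrable (lborel \<Otimes>\<^sub>M lborel) hu"
      using hq_int hu_int by (simp_all add: lborel_prod)
    from pair_sigma_finite.AE_integrable_fst'[OF ps this(1)] pair_sigma_finite.AE_integrable_fst'[OF ps this(2)]
    show ?thesis unfolding good_def by eventually_elim simp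
  qed
  from AEgood obtain N where N: "{\<theta> \<in> space lborel. \<not> good \<theta>} \<subseteq> N" "emeasure lborel N = 0" "N \<in> sets lborel"
    by (rule AE_E)
  have Nnull: "N \<in> null_sets lborel" using N by (simp add: null_sets_def)
  have Nb: "N \<in> sets borel" using N(3) by simp
  have goodN: "good \<theta>" if "\<theta> \<notin> N" for \<theta> using N(1) that by auto
  define B where "B = N \<times> (UNIV :: real set)"
  have Bnull: "B \<in> null_sets (lborel :: (real \<times> real) measure)"
  proof -
    have "B \<in> null_sets ((lborel :: real measure) \<Otimes>\<^sub>M (lborel :: real measure))"
      unfolding B_def by (rule sigma_finite_measure.times_in_null_sets1[OF _ Nnull]) (auto intro: lborel.sigma_finite_measure_axioms)
    then show ?thesis by (simp add: lborel_prod)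
  qed
  have Bb: "B \<in> sets borel" using null_setsD2[OF Bnull] by simp
  have int0: "(LINT z:B|lborel. h z) = 0" for h :: "real \<times> real \<Rightarrow> real"
    unfolding set_lebesgue_integral_def
    by (rule integral_eq_zero_AE) (use AE_not_in[OF Bnull] in \<open>eventually_elim, simp\<close>)
  have pm: "(\<lambda>\<omega>. (\<Theta> \<omega>, \<Gamma> \<omega>)) \<in> borel_measurable M"
    using Th_rv Ga_rv by (subst borel_prod[symmetric]) (rule measurable_Pair)
  define S1 where "S1 = {\<omega>\<in>space M. Q \<omega> = 1 \<and> (\<Theta> \<omega>, \<Gamma> \<omega>) \<in> B}"
  define S0 where "S0 = {\<omega>\<in>space M. Q \<omega> = 0 \<and> (\<Theta> \<omega>, \<Gamma> \<omega>) \<in> B}"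
  have S1m: "S1 \<in> sets M" unfolding S1_def using Q_rv pm Bb by measurable
  have S0m: "S0 \<in> sets M" unfolding S0_def using Q_rv pm Bb by measurable
  have "measure M S1 = 0" unfolding S1_def using dens_q Bb int0 by simp
  then have S1n: "S1 \<in> null_sets M" using S1m by (simp add: null_sets_def emeasure_eq_measure)
  have "measure M S0 = 0" unfolding S0_def using dens_u Bb int0 by simp
  then have S0n: "S0 \<in> null_sets M" using S0m by (simp add: null_sets_def emeasure_eq_measure)
  have AE_Th: "AE \<omega> in M. \<Theta> \<omega> \<notin> N"
    using AE_not_in[OF S1n] AE_not_in[OF S0n] AE_space
  proof eventually_elim
    case (elim \<omega>)
    then show ?case using Q_vals by (auto simp: S1_def S0_def B_def)
  qed
  have snd_set: "{p \<in> space (borel :: (real \<times> real) measure). snd p \<notin> N} \<in> sets borel"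
  proof -
    have "{p \<in> space (borel :: (real \<times> real) measure). snd p \<notin> N} = UNIV \<times> (- N)" by auto
    also have "\<dots> \<in> sets ((borel :: real measure) \<Otimes>\<^sub>M (borel :: real measure))"
      using Nb by (intro pair_measureI) auto
    finally show ?thesis by (metis borel_prod space_borel UNIV_I)
  qed
  have pmi: "(\<lambda>\<omega>. (Qs i \<omega>, Ths i \<omega>)) \<in> borel_measurable M" if "i \<ge> 1" for i
    using copies_rv that by (subst borel_prod[symmetric]) (auto intro: measurable_Pair)
  have pmQ: "(\<lambda>\<omega>. (Q \<omega>, \<Theta> \<omega>)) \<in> borel_measurable M"
    using Q_rv Th_rv by (subst borel_prod[symmetric]) (rule measurable_Pair)
  have AE_Ths1: "AE \<omega> in M. Ths i \<omega> \<notin> N" if i: "i \<ge> 1" for i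
  proof -
    have "AE p in distr M borel (\<lambda>\<omega>. (Q \<omega>, \<Theta> \<omega>)). snd p \<notin> N"
      using AE_Th by (subst AE_distr_iff[OF pmQ snd_set]) simp
    moreover have eq: "distr M borel (\<lambda>\<omega>. (Qs i \<omega>, Ths i \<omega>)) = distr M borel (\<lambda>\<omega>. (Q \<omega>, \<Theta> \<omega>))"
      using copies_distr[rule_format, OF i] .
    ultimately have "AE p in distr M borel (\<lambda>\<omega>. (Qs i \<omega>, Ths i \<omega>)). snd p \<notin> N"
      by (simp only: eq)
    then show ?thesis by (subst (asm) AE_distr_iff[OF pmi[OF i] snd_set]) simp
  qed
  have AE_Ths: "AE \<omega> in M. \<forall>i. i \<ge> 1 \<longrightarrow> Ths i \<omega> \<notin> N"
    unfolding AE_all_countable using AE_Ths1 by (auto intro: AE_I2)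
  have fstm: "fst \<in> borel_measurable (borel :: (real \<times> real) measure)"
    by (subst borel_prod[symmetric]) (rule measurable_fst)
  have indQ: "indep_vars (\<lambda>_. borel) Qs {1..}"
  proof -
    have "indep_vars (\<lambda>_. borel) (\<lambda>i \<omega>. fst (Qs i \<omega>, Ths i \<omega>)) {1..}"
      by (rule indep_vars_compose2[OF copies_indep]) (rule fstm)
    then show ?thesis by simp
  qed
  have distQ: "\<forall>i\<ge>1. distr M borel (Qs i) = distr M borel Q"
  proof (intro allI impI)
    fix i :: nat assume i: "i \<ge> 1"
    have "distr M borel (Qs i) = distr (distr M borel (\<lambda>\<omega>. (Qs i \<omega>, Ths i \<omega>))) borel fst"
      by (subst distr_distr[OF fstm pmi[OF i]]) (simp add: comp_def)
    also have "\<dots> = distr (distr M borel (\<lambda>\<omega>. (Q \<omega>, \<Theta> \<omega>))) borel fst"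
      using copies_distr[rule_format, OF i] by (simp only:)
    also have "\<dots> = distr M borel Q"
      by (subst distr_distr[OF fstm pmQ]) (simp add: comp_def)
    finally show "distr M borel (Qs i) = distr M borel Q" .
  qed
  have EQ: "integrable M Q" "expectation Q = \<pi>" using expect_Q[OF Q_rv Q_vals Q_prob] by auto
  have AEQ01: "AE x in M. Q x \<in> {0..1}" by (rule AE_I2) (use Q_vals in auto)
  have slln: "AE \<omega> in M. (\<lambda>n. (\<Sum>i\<in>{1..n}. Qs i \<omega>) / real n) \<longlonglongrightarrow> \<pi>"
    using slln01[OF P indQ distQ Q_rv AEQ01] EQ(2) by simp
  have lim2: "((\<lambda>\<tau>. regret c xq xu (s2 hq hu \<pi> xq xu \<theta> \<tau>) q) \<longlongrightarrow> - xu) (at_left xq)" for \<theta> q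
    by (rule regret_lim0[OF s2_lim[OF hq_meas hu_meas hq_pos hu_pos pi_bd xq_pos xu_pos] c_bd(1)])
  have lim1: "((\<lambda>\<tau>. regret c xq xu (s1 hq hu \<pi> xq xu \<theta> \<tau>) q) \<longlongrightarrow> (xq + xu) - (xq + xu) * q) (at_left xq)"
    if "\<theta> \<notin> N" for \<theta> q
  proof -
    have g: "good \<theta>" by (rule goodN[OF that])
    have "((\<lambda>\<tau>. regret c xq xu (s1 hq hu \<pi> xq xu \<theta> \<tau>) q) \<longlongrightarrow> xq - (q * xq - (1 - q) * xu)) (at_left xq)"
      by (rule regret_lim1[OF s1_lim[OF hq_meas hu_meas hq_pos hu_pos pi_bd xq_pos xu_pos] c_bd(2)])
         (use g l_mono_ga l_sup in \<open>auto simp: good_def\<close>)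
    moreover have "xq - (q * xq - (1 - q) * xu) = (xq + xu) - (xq + xu) * q" by (simp add: algebra_simps)
    ultimately show ?thesis by simp
  qed
  show ?thesis
  proof (intro conjI)
    show "AE \<omega> in M. \<exists>L :: nat \<Rightarrow> real.
        (\<forall>m\<ge>1. ((\<lambda>\<tau>. avg_regret c xq xu (s2 hq hu \<pi> xq xu) Qs Ths m \<omega> \<tau>) \<longlongrightarrow> L m) (at_left xq))
        \<and> L \<longlonglongrightarrow> - xu"
    proof (rule AE_I2, rule exI[of _ "\<lambda>_. - xu"], intro conjI allI impI)
      fix \<omega> and m :: nat assume m: "m \<ge> 1"
      have "((\<lambda>\<tau>. avg_regret c xq xu (s2 hq hu \<pi> xq xu) Qs Ths m \<omega> \<tau>) \<longlongrightarrow> (1 / real m) * (\<Sum>i\<in>{1..m}. - xu)) (at_left xq)"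
        by (rule avg_lim) (rule lim2)
      moreover have "(1 / real m) * (\<Sum>i\<in>{1..m}. - xu) = - xu" using m by simp
      ultimately show "((\<lambda>\<tau>. avg_regret c xq xu (s2 hq hu \<pi> xq xu) Qs Ths m \<omega> \<tau>) \<longlongrightarrow> - xu) (at_left xq)" by simp
    qed simp
    show "AE \<omega> in M. \<exists>L :: nat \<Rightarrow> real.
        (\<forall>m\<ge>1. ((\<lambda>\<tau>. avg_regret c xq xu (s1 hq hu \<pi> xq xu) Qs Ths m \<omega> \<tau>) \<longlongrightarrow> L m) (at_left xq))
        \<and> L \<longlonglongrightarrow> (1 - \<pi>) * (xq + xu)"
      using AE_Ths slln
    proof eventually_elim
      case (elim \<omega>)
      define L where "L m = (1 / real m) * (\<Sum>i\<in>{1..m}. (xq + xu) - (xq + xu) * Qs i \<omega>)" for m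
      have "((\<lambda>\<tau>. avg_regret c xq xu (s1 hq hu \<pi> xq xu) Qs Ths m \<omega> \<tau>) \<longlongrightarrow> L m) (at_left xq)" if "m \<ge> 1" for m
        unfolding L_def by (rule avg_lim) (use elim(1) lim1 in auto)
      moreover have "L \<longlonglongrightarrow> (1 - \<pi>) * (xq + xu)"
      proof -
        have "(\<lambda>n. (xq + xu) - (xq + xu) * ((\<Sum>i\<in>{1..n}. Qs i \<omega>) / real n)) \<longlonglongrightarrow> (xq + xu) - (xq + xu) * \<pi>"
          by (intro tendsto_intros elim(2))
        moreover have "eventually (\<lambda>n. (xq + xu) - (xq + xu) * ((\<Sum>i\<in>{1..n}. Qs i \<omega>) / real n) = L n) sequentially"
          using eventually_ge_at_top[of "1::nat"]
        proof eventually_elim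
          case (elim n)
          then show ?case unfolding L_def
            by (simp add: sum_subtractf sum_distrib_left[symmetric] sum.distrib field_simps)
        qed
        ultimately have "L \<longlonglongrightarrow> (xq + xu) - (xq + xu) * \<pi>" by (rule Lim_transform_eventually)
        moreover have "(xq + xu) - (xq + xu) * \<pi> = (1 - \<pi>) * (xq + xu)" by (simp add: algebra_simps)
        ultimately show ?thesis by simp
      qed
      ultimately show ?case by blast
    qed
    show "\<exists>Y2 Y1 :: 'a \<Rightarrow> real.
        (AE \<omega> in M. ((\<lambda>\<tau>. regret c xq xu (s2 hq hu \<pi> xq xu (\<Theta> \<omega>) \<tau>) (Q \<omega>)) \<longlongrightarrow> Y2 \<omega>) (at_left xq))
      \<and> (AE \<omega> in M. ((\<lambda>\<tau>. regret c xq xu (s1 hq hu \<pi> xq xu (\<Theta> \<omega>) \<tau>) (Q \<omega>)) \<longlongrightarrow> Y1 \<omega>) (at_left xq))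
      \<and> integrable M Y2 \<and> integrable M Y1
      \<and> (LINT \<omega>|M. Y2 \<omega>) = - xu
      \<and> (LINT \<omega>|M. Y1 \<omega>) = (1 - \<pi>) * (xq + xu)
      \<and> (LINT \<omega>|M. Y2 \<omega> - Y1 \<omega>) < 0"
    proof (intro exI conjI)
      show "AE \<omega> in M. ((\<lambda>\<tau>. regret c xq xu (s2 hq hu \<pi> xq xu (\<Theta> \<omega>) \<tau>) (Q \<omega>)) \<longlongrightarrow> (\<lambda>_. - xu) \<omega>) (at_left xq)"
        by (rule AE_I2) (simp add: lim2)
      show "AE \<omega> in M. ((\<lambda>\<tau>. regret c xq xu (s1 hq hu \<pi> xq xu (\<Theta> \<omega>) \<tau>) (Q \<omega>)) \<longlongrightarrow> (\<lambda>\<omega>. (xq + xu) - (xq + xu) * Q \<omega>) \<omega>) (at_left xq)"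
        using AE_Th by eventually_elim (simp add: lim1)
      show i2: "integrable M (\<lambda>_. - xu)" by simp
      show i1: "integrable M (\<lambda>\<omega>. (xq + xu) - (xq + xu) * Q \<omega>)"
        using EQ(1) by (intro Bochner_Integration.integrable_diff Bochner_Integration.integrable_mult_right integrable_const)
      show e2: "(LINT \<omega>|M. - xu) = - xu" by (simp add: prob_space.prob_space[OF P])
      show e1: "(LINT \<omega>|M. (xq + xu) - (xq + xu) * Q \<omega>) = (1 - \<pi>) * (xq + xu)"
        using EQ by (simp add: algebra_simps prob_space.prob_space[OF P])
      have "(LINT \<omega>|M. - xu - ((xq + xu) - (xq + xu) * Q \<omega>)) = - xu - (1 - \<pi>) * (xq + xu)"
        using Bochner_Integration.integral_diff[OF i2 i1] e1 e2 by simp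
      also have "\<dots> < 0"
      proof -
        have "(1 - \<pi>) * (xq + xu) > 0" using pi_bd xq_pos xu_pos by simp
        then show ?thesis using xu_pos by linarith
      qed
      finally show "(LINT \<omega>|M. (\<lambda>_. - xu) \<omega> - (\<lambda>\<omega>. (xq + xu) - (xq + xu) * Q \<omega>) \<omega>) < 0" by simp
    qed
  qed
qed

end
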